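(* Let $G$ be a finite bipartite multigraph and let $d_v$ denote the degree of $v\in V(G)$. Assume each vertex $v$ is assigned a nonnegative integer $u_v$ with $2u_v\le d_v$. Then there exist a subset of edges $W\subset E(G)$ and an orientation of the edges of $W$ such that the outdegree (with respect to the oriented edges of $W$) of each vertex $v$ is exactly $u_v$.
   Context: In a multigraph, multiple edges between the same pair of vertices are allowed and each contributes to the degree. *)

theory Defs
  imports Main
begin

text \<open>A finite multigraph is given by a vertex set V, a set of edge identifiers E
  and two endpoint maps end1, end2 (parallel edges = distinct identifiers with the
  same endpoints).\<close>

definition multigraph :: "'a set \<Rightarrow> 'e set \<Rightarrow> ('e \<Rightarrow> 'a) \<Rightarrow> ('e \<Rightarrow> 'a) \<Rightarrow> bool" where
  "multigraph V E end1 end2 \<longleftrightarrow> finite V \<and> finite E \<and> (\<forall>e\<in>E. end1 e \<in> V \<and> end2 e \<in> V)"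

definition bipartite_mg :: "'a set \<Rightarrow> 'e set \<Rightarrow> ('e \<Rightarrow> 'a) \<Rightarrow> ('e \<Rightarrow> 'a) \<Rightarrow> bool" where
  "bipartite_mg V E end1 end2 \<longleftrightarrow> (\<exists>A B. A \<inter> B = {} \<and> A \<union> B = V \<and>
     (\<forall>e\<in>E. (end1 e \<in> A \<and> end2 e \<in> B) \<or> (end1 e \<in> B \<and> end2 e \<in> A)))"

definition mg_degree :: "'e set \<Rightarrow> ('e \<Rightarrow> 'a) \<Rightarrow> ('e \<Rightarrow> 'a) \<Rightarrow> 'a \<Rightarrow> nat" where
  "mg_degree E end1 end2 v = card {e\<in>E. end1 e = v} + card {e\<in>E. end2 e = v}"

definition is_orientation :: "'e set \<Rightarrow> ('e \<Rightarrow> 'a) \<Rightarrow> ('e \<Rightarrow> 'a) \<Rightarrow> ('e \<Rightarrow> 'a) \<Rightarrow> bool" where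
  "is_orientation W end1 end2 tail \<longleftrightarrow> (\<forall>e\<in>W. tail e = end1 e \<or> tail e = end2 e)"

definition outdeg :: "'e set \<Rightarrow> ('e \<Rightarrow> 'a) \<Rightarrow> 'a \<Rightarrow> nat" where
  "outdeg W tail v = card {e\<in>W. tail e = v}"

end

theory Submission
  imports Defs
begin

definition inc :: "('e \<Rightarrow> 'a) \<Rightarrow> ('e \<Rightarrow> 'a) \<Rightarrow> 'a \<Rightarrow> 'e \<Rightarrow> nat" where
  "inc end1 end2 v e = (if end1 e = v then 1 else 0) + (if end2 e = v then 1 else 0)"

definition Degd :: "'e set \<Rightarrow> ('e \<Rightarrow> 'a) \<Rightarrow> ('e \<Rightarrow> 'a) \<Rightarrow> 'a \<Rightarrow> nat" where
  "Degd E end1 end2 v = (\<Sum>e\<in>E. inc end1 end2 v e)"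

definition Outd :: "'e set \<Rightarrow> ('e \<Rightarrow> 'a) \<Rightarrow> 'a \<Rightarrow> nat" where
  "Outd E tail v = (\<Sum>e\<in>E. if tail e = v then 1 else 0)"

lemma card_filter_sum: "finite E \<Longrightarrow> card {e\<in>E. P e} = (\<Sum>e\<in>E. if P e then 1 else (0::nat))"
  using sum.inter_filter[of E "\<lambda>_. 1::nat" P] by simp

lemma bal:
  "finite E \<Longrightarrow> \<exists>tail. (\<forall>e\<in>E. tail e = end1 e \<or> tail e = end2 e) \<and>
      (\<forall>v. Degd E end1 end2 v \<le> 2 * Outd E tail v + 1)"
proof (induction "card E" arbitrary: E end1 end2 rule: less_induct)
  case less
  show ?case
  proof (cases "\<forall>v. Degd E end1 end2 v \<le> 1")
    case True
    then show ?thesis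
      by (intro exI[of _ end1]) (auto intro: order.trans[OF spec[OF True]])
  next
    case False
    then obtain v where "\<not> Degd E end1 end2 v \<le> 1" by blast
    then have dv: "Degd E end1 end2 v \<ge> 2" by simp
    show ?thesis
    proof (cases "\<exists>e\<in>E. end1 e = v \<and> end2 e = v")
      case True
      then obtain e where e: "e \<in> E" "end1 e = v" "end2 e = v" by blast
      have "card (E - {e}) < card E" using e less.prems by (rule_tac card_Diff1_less)
      from less.hyps[OF this, of end1 end2] less.prems obtain t where
        t: "\<forall>x\<in>E-{e}. t x = end1 x \<or> t x = end2 x" "\<forall>w. Degd (E-{e}) end1 end2 w \<le> 2 * Outd (E-{e}) t w + 1"
        by auto
      define tail where "tail = t(e := v)"
      have O: "Outd E tail w = Outd (E-{e}) t w + (if v = w then 1 else 0)" for w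
      proof -
        have "Outd E tail w = (if tail e = w then 1 else 0) + Outd (E-{e}) tail w"
          unfolding Outd_def using e less.prems by (simp add: sum.remove)
        moreover have "Outd (E-{e}) tail w = Outd (E-{e}) t w"
          unfolding Outd_def tail_def by (intro sum.cong) auto
        ultimately show ?thesis by (simp add: tail_def)
      qed
      have D: "Degd E end1 end2 w = Degd (E-{e}) end1 end2 w + inc end1 end2 w e" for w
        unfolding Degd_def using e less.prems by (simp add: sum.remove)
      show ?thesis
      proof (intro exI[of _ tail] conjI ballI allI)
        fix x assume "x \<in> E" then show "tail x = end1 x \<or> tail x = end2 x"
          using t(1) e by (auto simp: tail_def)
      next
        fix w
        show "Degd E end1 end2 w \<le> 2 * Outd E tail w + 1"
          using D[of w] O[of w] t(2) e by (auto simp: inc_def)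
      qed
    next
      case False
      define S where "S = {e\<in>E. end1 e = v \<or> end2 e = v}"
      have "Degd E end1 end2 v = card S"
        unfolding Degd_def S_def using False less.prems
        by (subst card_filter_sum) (auto intro!: sum.cong simp: inc_def)
      with dv have "card S \<ge> 2" by simp
      have fS: "finite S" using less.prems by (simp add: S_def)
      have "S \<noteq> {}" using \<open>card S \<ge> 2\<close> by auto
      then obtain e1 where "e1 \<in> S" by blast
      have "card (S - {e1}) \<ge> 1" using \<open>card S \<ge> 2\<close> \<open>e1 \<in> S\<close> fS by simp
      then have "S - {e1} \<noteq> {}" by (metis card.empty not_one_le_zero)
      then obtain e2 where "e2 \<in> S - {e1}" by blast
      then have e12: "e1 \<in> S" "e2 \<in> S" "e1 \<noteq> e2" using \<open>e1 \<in> S\<close> by auto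
      define oth where "oth e = (if end1 e = v then end2 e else end1 e)" for e
      define a where "a = oth e1"
      define b where "b = oth e2"
      have E12: "e1 \<in> E" "e2 \<in> E" using e12 by (auto simp: S_def)
      have av: "a \<noteq> v" "b \<noteq> v" using e12 False by (auto simp: a_def b_def oth_def S_def)
      have inc1: "inc end1 end2 w e1 = (if w = v then 1 else 0) + (if w = a then 1 else 0)" for w
        using e12 False av by (auto simp: inc_def a_def oth_def S_def)
      have inc2: "inc end1 end2 w e2 = (if w = v then 1 else 0) + (if w = b then 1 else 0)" for w
        using e12 False av by (auto simp: inc_def b_def oth_def S_def)
      define E' where "E' = E - {e2}"
      define f1 where "f1 = end1(e1 := a)"
      define f2 where "f2 = end2(e1 := b)"
      have "card E' < card E" unfolding E'_def using E12 less.prems by (rule_tac card_Diff1_less)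
      from less.hyps[OF this, of f1 f2] less.prems obtain t where
        t: "\<forall>x\<in>E'. t x = f1 x \<or> t x = f2 x" "\<forall>w. Degd E' f1 f2 w \<le> 2 * Outd E' t w + 1"
        by (auto simp: E'_def)
      define R where "R = E - {e1, e2}"
      have fR: "finite R" using less.prems by (simp add: R_def)
      have E'R: "E' = insert e1 R" "e1 \<notin> R" using E12 e12 by (auto simp: E'_def R_def)
      have ER: "E = insert e2 (insert e1 R)" "e2 \<notin> insert e1 R" using E12 e12 by (auto simp: R_def)
      have DR: "Degd R f1 f2 w = Degd R end1 end2 w" for w
        unfolding Degd_def f1_def f2_def inc_def using E'R by (intro sum.cong) auto
      have DE: "Degd E end1 end2 w = Degd R end1 end2 w + inc end1 end2 w e1 + inc end1 end2 w e2" for w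
        unfolding Degd_def using ER E'R(2) fR by simp
      have DE': "Degd E' f1 f2 w = Degd R end1 end2 w + (if w = a then 1 else 0) + (if w = b then 1 else 0)" for w
        using DR[of w] E'R fR unfolding Degd_def by (simp add: f1_def f2_def inc_def)
      have te1: "t e1 = a \<or> t e1 = b" using t(1) E'R by (auto simp: f1_def f2_def)
      define tail where "tail = (if t e1 = a then t(e2 := v) else t(e1 := v, e2 := b))"
      have OR: "Outd R tail w = Outd R t w" for w
        unfolding Outd_def tail_def using ER E'R by (intro sum.cong) auto
      have OE: "Outd E tail w = Outd R t w + (if tail e1 = w then 1 else 0) + (if tail e2 = w then 1 else 0)" for w
        using OR[of w] ER E'R(2) fR unfolding Outd_def by simp
      have OE': "Outd E' t w = Outd R t w + (if t e1 = w then 1 else 0)" for w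
        using E'R fR unfolding Outd_def by simp
      have key: "Outd E tail w = Outd E' t w + (if w = v then 1 else 0)" for w
        using OE[of w] OE'[of w] te1 e12 by (auto simp: tail_def)
      show ?thesis
      proof (intro exI[of _ tail] conjI ballI allI)
        fix x assume x: "x \<in> E" show "tail x = end1 x \<or> tail x = end2 x"
        proof (cases "x = e1 \<or> x = e2")
          case True
          then show ?thesis using e12 te1 t(1) E'R av
            by (auto simp: tail_def S_def a_def b_def oth_def)
        next
          case False
          then have "x \<in> E'" using x by (auto simp: E'_def)
          then show ?thesis using t(1) False by (auto simp: tail_def f1_def f2_def)
        qed
      next
        fix w
        show "Degd E end1 end2 w \<le> 2 * Outd E tail w + 1"
          using DE[of w] DE'[of w] key[of w] spec[OF t(2), of w] inc1[of w] inc2[of w]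
          by (simp split: if_splits)
      qed
    qed
  qed
qed

theorem claim2p2:
  fixes V :: "'a set" and E :: "'e set" and end1 end2 :: "'e \<Rightarrow> 'a" and u :: "'a \<Rightarrow> nat"
  assumes "multigraph V E end1 end2"
    and "bipartite_mg V E end1 end2"
    and "\<forall>v\<in>V. 2 * u v \<le> mg_degree E end1 end2 v"
  shows "\<exists>W tail. W \<subseteq> E \<and> is_orientation W end1 end2 tail \<and> (\<forall>v\<in>V. outdeg W tail v = u v)"
proof -
  have fE: "finite E" using assms(1) by (simp add: multigraph_def)
  obtain tail where t: "\<forall>e\<in>E. tail e = end1 e \<or> tail e = end2 e"
    "\<forall>v. Degd E end1 end2 v \<le> 2 * Outd E tail v + 1" using bal[OF fE] by blast
  have md: "mg_degree E end1 end2 v = Degd E end1 end2 v" for v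
    unfolding mg_degree_def Degd_def inc_def using fE
    by (simp add: card_filter_sum sum.distrib)
  have "u v \<le> card {e\<in>E. tail e = v}" if "v \<in> V" for v
  proof -
    have "2 * u v \<le> 2 * Outd E tail v + 1"
      using assms(3) that t(2)[rule_format, of v] md[of v] by force
    then have "u v \<le> Outd E tail v" by linarith
    then show ?thesis using fE by (simp add: Outd_def card_filter_sum)
  qed
  then have "\<forall>v\<in>V. \<exists>S. S \<subseteq> {e\<in>E. tail e = v} \<and> card S = u v"
    by (meson obtain_subset_with_card_n)
  then obtain S where S: "\<And>v. v \<in> V \<Longrightarrow> S v \<subseteq> {e\<in>E. tail e = v} \<and> card (S v) = u v"
    by metis
  define W where "W = (\<Union>v\<in>V. S v)"
  have "{e\<in>W. tail e = v} = S v" if "v \<in> V" for v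
    using S that unfolding W_def by blast
  moreover have "W \<subseteq> E" using S unfolding W_def by blast
  moreover have "is_orientation W end1 end2 tail"
    unfolding is_orientation_def using t(1) \<open>W \<subseteq> E\<close> by blast
  ultimately show ?thesis
    unfolding outdeg_def using S by (intro exI[of _ W] exI[of _ tail]) simp
qed

end
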